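(* Let $F$ be the cumulative distribution function of the Cantor distribution and let $m$ be its mean residual life function. Then: (i) $m$ is continuous on $[0,1]$, and for every $x\in[0,1)$, $$m(x)=\frac{1}{F(1-x)}\int_0^{1-x}F(u)\,du .$$ (ii) For every $x\in(0,1)$, each of the functions $m$ and $e$ is locally decreasing at $x$ if and only if $x\in[0,1]\setminus\mathcal C$. (iii) The equation $m(x)=x$ has exactly one solution in $[0,1]$, namely $x^*=\tfrac{5}{12}$.
   Context: The Cantor set is $\mathcal C=\bigcap_{n\ge1}C_n$, where $C_0=[0,1]$ and $C_n=\tfrac13C_{n-1}\cup\left(\tfrac23+\tfrac13C_{n-1}\right)$ for $n\ge1$. The Cantor distribution is the probability distribution on $[0,1]$ that is uniform on $\mathcal C$; its CDF $F$ (the Cantor function) is continuous and nondecreasing, with $F(0)=0$ and $F(1)=1$. For a random variable $X$ on $[0,1]$ with continuous CDF $F$, the mean residual life (MRL) function is $$m(x)=\mathbb E[X-x\mid X>x]=\frac{1}{1-F(x)}\int_x^1(1-F(u))\,du \quad (x<1),\qquad m(x)=0\quad(x\ge1).$$ The generalized mean residual life function is $e(x)=m(x)/x$ for $0<x<1$. A function $f:(0,1)\to\mathbb R$ is called locally decreasing at $x\in(0,1)$ if there is an open neighborhood $U$ of $x$ such that $f|_U$ is non-increasing. *)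

theory Defs
  imports "HOL-Analysis.Analysis"
begin

primrec cantor_step :: "nat \<Rightarrow> real set" where
  "cantor_step 0 = {0..1}"
| "cantor_step (Suc n) = (\<lambda>x. x / 3) ` cantor_step n \<union> (\<lambda>x. 2/3 + x / 3) ` cantor_step n"

definition cantor_set :: "real set" where
  "cantor_set = (\<Inter>n. cantor_step n)"

primrec cantor_iter :: "nat \<Rightarrow> real \<Rightarrow> real" where
  "cantor_iter 0 x = x"
| "cantor_iter (Suc n) x =
     (if x \<le> 1/3 then cantor_iter n (3 * x) / 2
      else if x < 2/3 then 1/2
      else 1/2 + cantor_iter n (3 * x - 2) / 2)"

definition cantor_fun :: "real \<Rightarrow> real" where
  "cantor_fun x = (if x < 0 then 0 else if x > 1 then 1 else lim (\<lambda>n. cantor_iter n x))"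

definition mrl :: "real \<Rightarrow> real" where
  "mrl x = (if x < 1 then (1 / (1 - cantor_fun x)) * integral {x..1} (\<lambda>u. 1 - cantor_fun u)
            else 0)"

text \<open>Generalized mean residual life function e(x) = m(x)/x (used on (0,1)).\<close>
definition gmrl :: "real \<Rightarrow> real" where
  "gmrl x = mrl x / x"

definition locally_decreasing_at :: "(real \<Rightarrow> real) \<Rightarrow> real \<Rightarrow> bool" where
  "locally_decreasing_at f x \<longleftrightarrow>
     (\<exists>U. open U \<and> x \<in> U \<and> U \<subseteq> {0<..<1} \<and> (\<forall>a\<in>U. \<forall>b\<in>U. a \<le> b \<longrightarrow> f b \<le> f a))"

end

theory Submission imports Defs begin

lemma iter_0 [simp]: "cantor_iter n 0 = 0"
  by (induction n) auto

lemma iter_1 [simp]: "cantor_iter n 1 = 1"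
  by (induction n) auto

lemma iS1: "x \<le> 1/3 \<Longrightarrow> cantor_iter (Suc n) x = cantor_iter n (3*x) / 2" by simp
lemma iS2: "1/3 < x \<Longrightarrow> x < 2/3 \<Longrightarrow> cantor_iter (Suc n) x = 1/2" by simp
lemma iS3: "2/3 \<le> x \<Longrightarrow> cantor_iter (Suc n) x = 1/2 + cantor_iter n (3*x-2) / 2" by simp

lemma iter_range: "x \<in> {0..1} \<Longrightarrow> cantor_iter n x \<in> {0..1}"
proof (induction n arbitrary: x)
  case 0 then show ?case by simp
next
  case (Suc n)
  consider "x \<le> 1/3" | "1/3 < x" "x < 2/3" | "2/3 \<le> x" by linarith
  then show ?case
  proof cases
    case 1
    with Suc.prems have "3*x \<in> {0..1}" by auto
    from Suc.IH[OF this] 1 show ?thesis by (auto simp del: cantor_iter.simps simp: iS1)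
  next
    case 2 then show ?thesis by (auto simp del: cantor_iter.simps simp: iS2)
  next
    case 3
    with Suc.prems have "3*x - 2 \<in> {0..1}" by auto
    from Suc.IH[OF this] 3 show ?thesis by (auto simp del: cantor_iter.simps simp: iS3)
  qed
qed

lemma iter_diff: "x \<in> {0..1} \<Longrightarrow> \<bar>cantor_iter (Suc n) x - cantor_iter n x\<bar> \<le> (1/2)^n"
proof (induction n arbitrary: x)
  case 0
  have a: "cantor_iter (Suc 0) x \<in> {0..1}" by (rule iter_range[OF 0])
  have "cantor_iter 0 x = x" by simp
  then show ?case using a 0 by (simp only: atLeastAtMost_iff power_0 abs_le_iff) linarith
next
  case (Suc n)
  consider "x \<le> 1/3" | "1/3 < x" "x < 2/3" | "2/3 \<le> x" by linarith
  then show ?case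
  proof cases
    case 1
    with Suc.prems have "3*x \<in> {0..1}" by auto
    from Suc.IH[OF this] 1 show ?thesis
      by (simp del: cantor_iter.simps add: iS1[of x] iS1[of x "Suc n"] abs_div flip: diff_divide_distrib)
  next
    case 2 then show ?thesis by (auto simp del: cantor_iter.simps simp: iS2)
  next
    case 3
    with Suc.prems have "3*x - 2 \<in> {0..1}" by auto
    from Suc.IH[OF this] 3 show ?thesis
      by (simp del: cantor_iter.simps add: iS3[of x] iS3[of x "Suc n"] abs_div flip: diff_divide_distrib)
  qed
qed

lemma iter_mono: "x \<in> {0..1} \<Longrightarrow> y \<in> {0..1} \<Longrightarrow> x \<le> y \<Longrightarrow> cantor_iter n x \<le> cantor_iter n y"
proof (induction n arbitrary: x y)
  case 0 then show ?case by simp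
next
  case (Suc n)
  have r: "\<And>z. z \<in> {0..1} \<Longrightarrow> cantor_iter n z \<in> {0..1}" by (rule iter_range)
  consider "y \<le> 1/3" | "x \<le> 1/3" "1/3 < y" "y < 2/3" | "x \<le> 1/3" "2/3 \<le> y"
    | "1/3 < x" "y < 2/3" | "1/3 < x" "x < 2/3" "2/3 \<le> y" | "2/3 \<le> x" by linarith
  then show ?case
  proof cases
    case 1
    then have "cantor_iter n (3*x) \<le> cantor_iter n (3*y)" using Suc by (intro Suc.IH) auto
    then show ?thesis using 1 Suc.prems by (simp del: cantor_iter.simps add: iS1)
  next
    case 2
    have "cantor_iter n (3*x) \<le> cantor_iter n 1" using Suc 2 by (intro Suc.IH) auto
    then show ?thesis using 2 by (simp del: cantor_iter.simps add: iS1 iS2)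
  next
    case 3
    have "3*x \<in> {0..1}" "3*y-2 \<in> {0..1}" using Suc 3 by auto
    then have "cantor_iter n (3*x) \<in> {0..1}" "cantor_iter n (3*y-2) \<in> {0..1}" by (auto intro!: r simp del: atLeastAtMost_iff)
    then show ?thesis using 3 by (simp del: cantor_iter.simps add: iS1 iS3)
  next
    case 4 then show ?thesis using Suc.prems by (simp del: cantor_iter.simps add: iS2)
  next
    case 5
    have "3*y-2 \<in> {0..1}" using Suc 5 by auto
    then have "cantor_iter n (3*y-2) \<in> {0..1}" by (auto intro!: r simp del: atLeastAtMost_iff)
    then show ?thesis using 5 by (simp del: cantor_iter.simps add: iS2 iS3)
  next
    case 6
    then have "cantor_iter n (3*x-2) \<le> cantor_iter n (3*y-2)" using Suc by (intro Suc.IH) auto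
    then show ?thesis using 6 Suc.prems by (simp del: cantor_iter.simps add: iS3)
  qed
qed

lemma iter_sym: "x \<in> {0..1} \<Longrightarrow> cantor_iter n (1 - x) = 1 - cantor_iter n x"
proof (induction n arbitrary: x)
  case 0 then show ?case by simp
next
  case (Suc n)
  consider "x < 1/3" | "x = 1/3" | "1/3 < x" "x < 2/3" | "x = 2/3" | "2/3 < x" by linarith
  then show ?case
  proof cases
    case 1
    have "cantor_iter n (1 - 3*x) = 1 - cantor_iter n (3*x)" using Suc 1 by (intro Suc.IH) auto
    moreover have "3 * (1 - x) - 2 = 1 - 3*x" by simp
    ultimately show ?thesis using 1 by (simp del: cantor_iter.simps add: iS1 iS3) (simp add: field_simps)
  next
    case 2
    have a: "cantor_iter (Suc n) (1/3) = 1/2" "cantor_iter (Suc n) (2/3) = 1/2" by simp_all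
    show ?thesis unfolding 2 using a by simp
  next
    case 3 then show ?thesis by (simp del: cantor_iter.simps add: iS2)
  next
    case 4
    have a: "cantor_iter (Suc n) (1/3) = 1/2" "cantor_iter (Suc n) (2/3) = 1/2" by simp_all
    show ?thesis unfolding 4 using a by simp
  next
    case 5
    have "cantor_iter n (1 - (3*x - 2)) = 1 - cantor_iter n (3*x-2)" using Suc 5 by (intro Suc.IH) auto
    moreover have "1 - (3*x - 2) = 3 * (1 - x)" by simp
    ultimately show ?thesis using 5 by (simp del: cantor_iter.simps add: iS1 iS3)
  qed
qed

lemma iter_cauchy: "x \<in> {0..1} \<Longrightarrow> \<bar>cantor_iter (n+m) x - cantor_iter n x\<bar> \<le> 2*(1/2)^n - 2*(1/2)^(n+m)"
proof (induction m)
  case 0 then show ?case by simp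
next
  case (Suc m)
  have "\<bar>cantor_iter (Suc (n+m)) x - cantor_iter (n+m) x\<bar> \<le> (1/2)^(n+m)" by (rule iter_diff[OF Suc.prems])
  then show ?case using Suc by (simp add: abs_le_iff) 
qed

lemma iter_lip: "x \<in> {0..1} \<Longrightarrow> y \<in> {0..1} \<Longrightarrow> x \<le> y \<Longrightarrow> cantor_iter n y - cantor_iter n x \<le> (3/2)^n * (y - x)"
proof (induction n arbitrary: x y)
  case 0 then show ?case by simp
next
  case (Suc n)
  have r: "\<And>z. z \<in> {0..1} \<Longrightarrow> cantor_iter n z \<in> {0..1}" by (rule iter_range)
  have p: "(0::real) \<le> (3/2)^n" by simp
  consider "y \<le> 1/3" | "x \<le> 1/3" "1/3 < y" "y < 2/3" | "x \<le> 1/3" "2/3 \<le> y"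
    | "1/3 < x" "y < 2/3" | "1/3 < x" "x < 2/3" "2/3 \<le> y" | "2/3 \<le> x" by linarith
  then show ?case
  proof cases
    case 1
    then have "cantor_iter n (3*y) - cantor_iter n (3*x) \<le> (3/2)^n * (3*y - 3*x)" using Suc by (intro Suc.IH) auto
    then show ?thesis using 1 Suc.prems by (simp del: cantor_iter.simps add: iS1 field_simps)
  next
    case 2
    have "cantor_iter n 1 - cantor_iter n (3*x) \<le> (3/2)^n * (1 - 3*x)" using Suc 2 by (intro Suc.IH) auto
    moreover have "(3/2)^n * (1 - 3*x) \<le> (3/2)^n * (3*y - 3*x)" using 2 p by (intro mult_left_mono) auto
    moreover have "cantor_iter (Suc n) y - cantor_iter (Suc n) x = (cantor_iter n 1 - cantor_iter n (3*x))/2"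
      using 2 by (simp del: cantor_iter.simps add: iS1 iS2 diff_divide_distrib)
    moreover have "(3/2)^Suc n * (y-x) = (3/2)^n*(3*y-3*x)/2" by (simp add: algebra_simps)
    ultimately show ?thesis by (metis (no_types, lifting) divide_right_mono order_trans zero_le_numeral)
  next
    case 3
    have "cantor_iter n 1 - cantor_iter n (3*x) \<le> (3/2)^n * (1 - 3*x)" using Suc 3 by (intro Suc.IH) auto
    moreover have "cantor_iter n (3*y-2) - cantor_iter n 0 \<le> (3/2)^n * (3*y-2 - 0)" using Suc 3 by (intro Suc.IH) auto
    moreover have "(3/2)^n * (1 - 3*x) + (3/2)^n * (3*y-2 - 0) \<le> (3/2)^n * (3*y - 3*x)" using 3 p
      by (simp flip: distrib_left)
    ultimately have s: "(cantor_iter n 1 - cantor_iter n (3*x)) + (cantor_iter n (3*y-2) - cantor_iter n 0) \<le> (3/2)^n * (3*y - 3*x)"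
      by linarith
    have e: "cantor_iter (Suc n) y - cantor_iter (Suc n) x = ((cantor_iter n 1 - cantor_iter n (3*x)) + (cantor_iter n (3*y-2) - cantor_iter n 0))/2"
      using 3 by (simp del: cantor_iter.simps add: iS1 iS3 field_simps)
    have "(3/2)^Suc n * (y-x) = (3/2)^n*(3*y-3*x)/2" by (simp add: algebra_simps)
    with e s show ?thesis by (metis (no_types, lifting) divide_right_mono zero_le_numeral)
  next
    case 4 then show ?thesis using Suc.prems by (simp del: cantor_iter.simps add: iS2)
  next
    case 5
    have "cantor_iter n (3*y-2) - cantor_iter n 0 \<le> (3/2)^n * (3*y-2 - 0)" using Suc 5 by (intro Suc.IH) auto
    moreover have "(3/2)^n * (3*y-2 - 0) \<le> (3/2)^n * (3*y - 3*x)" using 5 p by (intro mult_left_mono) auto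
    ultimately have "cantor_iter n (3*y-2) - cantor_iter n 0 \<le> (3/2)^n*(3*y-3*x)" by linarith
    then have "(cantor_iter n (3*y-2) - cantor_iter n 0)/2 \<le> (3/2)^n*(3*y-3*x)/2"
      by (rule divide_right_mono) simp
    moreover have "cantor_iter (Suc n) y - cantor_iter (Suc n) x = (cantor_iter n (3*y-2) - cantor_iter n 0)/2"
      using 5 by (simp del: cantor_iter.simps add: iS2 iS3 diff_divide_distrib)
    moreover have "(3/2)^Suc n * (y-x) = (3/2)^n*(3*y-3*x)/2" by (simp add: algebra_simps)
    ultimately show ?thesis by linarith
  next
    case 6
    then have "cantor_iter n (3*y-2) - cantor_iter n (3*x-2) \<le> (3/2)^n * ((3*y-2) - (3*x-2))" using Suc by (intro Suc.IH) auto
    then show ?thesis using 6 Suc.prems by (simp del: cantor_iter.simps add: iS3 field_simps)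
  qed
qed

lemma iter_cauchy2: assumes "x \<in> {0..1}" shows "\<bar>cantor_iter (n+m) x - cantor_iter n x\<bar> \<le> 2*(1/2)^n"
proof -
  have a: "\<bar>cantor_iter (n+m) x - cantor_iter n x\<bar> \<le> 2*(1/2)^n - 2*(1/2)^(n+m)" by (rule iter_cauchy[OF assms])
  have "0 \<le> 2*(1/2::real)^(n+m)" by simp
  then show ?thesis using a by linarith
qed

lemma iter_convergent: assumes "x \<in> {0..1}" shows "convergent (\<lambda>n. cantor_iter n x)"
proof -
  have "Cauchy (\<lambda>n. cantor_iter n x)"
  proof (rule metric_CauchyI)
    fix e :: real assume "e > 0"
    then obtain M where M: "(1/2)^M < e/4" using real_arch_pow_inv[of "e/4" "1/2::real"] by auto
    have "dist (cantor_iter m x) (cantor_iter n x) < e" if mM: "m \<ge> M" and nM: "n \<ge> M" for m n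
    proof -
      obtain k1 where k1: "m = M + k1" using le_Suc_ex[OF mM] by blast
      obtain k2 where k2: "n = M + k2" using le_Suc_ex[OF nM] by blast
      have "\<bar>cantor_iter m x - cantor_iter M x\<bar> \<le> 2*(1/2)^M"
        unfolding k1 by (rule iter_cauchy2[OF assms])
      moreover have "\<bar>cantor_iter n x - cantor_iter M x\<bar> \<le> 2*(1/2)^M"
        unfolding k2 by (rule iter_cauchy2[OF assms])
      ultimately show ?thesis using M unfolding dist_real_def by linarith
    qed
    then show "\<exists>M. \<forall>m\<ge>M. \<forall>n\<ge>M. dist (cantor_iter m x) (cantor_iter n x) < e" by blast
  qed
  then show ?thesis by (simp add: Cauchy_convergent_iff)
qed

lemma F_lim: "x \<in> {0..1} \<Longrightarrow> (\<lambda>n. cantor_iter n x) \<longlonglongrightarrow> cantor_fun x"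
  using iter_convergent[of x] unfolding cantor_fun_def by (auto simp: convergent_LIMSEQ_iff)

lemma F_err: assumes "x \<in> {0..1}" shows "\<bar>cantor_fun x - cantor_iter n x\<bar> \<le> 2*(1/2)^n"
proof -
  have "(\<lambda>m. \<bar>cantor_iter (n+m) x - cantor_iter n x\<bar>) \<longlonglongrightarrow> \<bar>cantor_fun x - cantor_iter n x\<bar>"
  proof -
    have l: "(\<lambda>m. cantor_iter (m+n) x) \<longlonglongrightarrow> cantor_fun x" by (rule LIMSEQ_ignore_initial_segment[OF F_lim[OF assms]])
    have "(\<lambda>m. cantor_iter (n+m) x) \<longlonglongrightarrow> cantor_fun x" using l by (simp add: add.commute)
    then show ?thesis by (intro tendsto_intros)
  qed
  moreover have "\<forall>m\<ge>0. \<bar>cantor_iter (n+m) x - cantor_iter n x\<bar> \<le> 2*(1/2)^n"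
    using iter_cauchy2[OF assms] by blast
  ultimately show ?thesis by (intro LIMSEQ_le_const2) auto
qed

lemma F_0 [simp]: "cantor_fun 0 = 0"
proof -
  have "(\<lambda>n. cantor_iter n (0::real)) \<longlonglongrightarrow> cantor_fun 0" by (rule F_lim) simp
  moreover have "(\<lambda>n. cantor_iter n (0::real)) \<longlonglongrightarrow> 0" by simp
  ultimately show ?thesis by (rule LIMSEQ_unique)
qed

lemma F_1 [simp]: "cantor_fun 1 = 1"
proof -
  have "(\<lambda>n. cantor_iter n (1::real)) \<longlonglongrightarrow> cantor_fun 1" by (rule F_lim) simp
  moreover have "(\<lambda>n. cantor_iter n (1::real)) \<longlonglongrightarrow> 1" by simp
  ultimately show ?thesis by (rule LIMSEQ_unique)
qed

lemma F_range01: assumes "x \<in> {0..1}" shows "cantor_fun x \<in> {0..1}"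
proof -
  have "0 \<le> cantor_fun x" using F_lim[OF assms] iter_range[OF assms]
    by (intro LIMSEQ_le_const[of "\<lambda>n. cantor_iter n x"]) auto
  moreover have "cantor_fun x \<le> 1" using F_lim[OF assms] iter_range[OF assms]
    by (intro LIMSEQ_le_const2[of "\<lambda>n. cantor_iter n x"]) auto
  ultimately show ?thesis by simp
qed

lemma F_ge0: "0 \<le> cantor_fun x"
  using F_range01[of x] by (auto simp: cantor_fun_def[of x])

lemma F_le1: "cantor_fun x \<le> 1"
  using F_range01[of x] by (auto simp: cantor_fun_def[of x])

lemma F_mono01: assumes "x \<in> {0..1}" "y \<in> {0..1}" "x \<le> y" shows "cantor_fun x \<le> cantor_fun y"
proof -
  have "(\<lambda>n. cantor_iter n y - cantor_iter n x) \<longlonglongrightarrow> cantor_fun y - cantor_fun x"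
    using F_lim[OF assms(1)] F_lim[OF assms(2)] by (intro tendsto_intros)
  moreover have "\<forall>n. 0 \<le> cantor_iter n y - cantor_iter n x" using iter_mono[OF assms] by auto
  ultimately have "0 \<le> cantor_fun y - cantor_fun x" by (intro LIMSEQ_le_const) auto
  then show ?thesis by simp
qed

lemma F_mono: assumes "x \<le> y" shows "cantor_fun x \<le> cantor_fun y"
proof (cases "x < 0 \<or> y > 1")
  case True
  then show ?thesis using F_ge0[of y] F_le1[of x] assms by (auto simp: cantor_fun_def)
next
  case False
  then show ?thesis using F_mono01[of x y] assms by force
qed

lemma F_third: assumes "u \<in> {0..1}" shows "cantor_fun (u/3) = cantor_fun u / 2"
proof -
  have a: "u/3 \<in> {0..1}" using assms by auto
  have "(\<lambda>n. cantor_iter (Suc n) (u/3)) \<longlonglongrightarrow> cantor_fun (u/3)"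
    using F_lim[OF a] by (rule LIMSEQ_Suc)
  moreover have "(\<lambda>n. cantor_iter (Suc n) (u/3)) = (\<lambda>n. cantor_iter n u / 2)"
    using assms by (auto simp del: cantor_iter.simps simp: iS1)
  moreover have "(\<lambda>n. cantor_iter n u / 2) \<longlonglongrightarrow> cantor_fun u / 2"
    using F_lim[OF assms] by (auto intro!: tendsto_intros)
  ultimately show ?thesis using LIMSEQ_unique by metis
qed

lemma F_twothird: assumes "u \<in> {0..1}" shows "cantor_fun (2/3 + u/3) = 1/2 + cantor_fun u / 2"
proof -
  have a: "2/3 + u/3 \<in> {0..1}" using assms by auto
  have "(\<lambda>n. cantor_iter (Suc n) (2/3 + u/3)) \<longlonglongrightarrow> cantor_fun (2/3 + u/3)"
    using F_lim[OF a] by (rule LIMSEQ_Suc)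
  moreover have "(\<lambda>n. cantor_iter (Suc n) (2/3 + u/3)) = (\<lambda>n. 1/2 + cantor_iter n u / 2)"
    using assms by (auto simp del: cantor_iter.simps simp: iS3)
  moreover have "(\<lambda>n. 1/2 + cantor_iter n u / 2) \<longlonglongrightarrow> 1/2 + cantor_fun u / 2"
    using F_lim[OF assms] by (auto intro!: tendsto_intros)
  ultimately show ?thesis using LIMSEQ_unique by metis
qed

lemma F_mid: assumes "x \<in> {1/3..2/3}" shows "cantor_fun x = 1/2"
proof -
  have "cantor_fun (1/3) = 1/2" using F_third[of 1] by simp
  moreover have "cantor_fun (2/3) = 1/2" using F_twothird[of 0] by simp
  ultimately show ?thesis using F_mono[of x "2/3"] F_mono[of "1/3" x] assms by auto
qed

lemma F_sym: assumes "x \<in> {0..1}" shows "cantor_fun (1 - x) = 1 - cantor_fun x"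
proof -
  have a: "1 - x \<in> {0..1}" using assms by auto
  have "(\<lambda>n. 1 - cantor_iter n x) \<longlonglongrightarrow> cantor_fun (1 - x)"
    using F_lim[OF a] iter_sym[OF assms] by simp
  moreover have "(\<lambda>n. 1 - cantor_iter n x) \<longlonglongrightarrow> 1 - cantor_fun x"
    using F_lim[OF assms] by (intro tendsto_intros)
  ultimately show ?thesis using LIMSEQ_unique by metis
qed

lemma F_lip: assumes "x \<in> {0..1}" "y \<in> {0..1}" "x \<le> y"
  shows "cantor_fun y - cantor_fun x \<le> 4*(1/2)^n + (3/2)^n*(y-x)"
  using F_err[OF assms(1), of n] F_err[OF assms(2), of n] iter_lip[OF assms, of n] by linarith

lemma F_cont: "continuous_on {0..1} cantor_fun"
  unfolding continuous_on_iff
proof (intro ballI allI impI)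
  fix x e :: real assume x: "x \<in> {0..1}" and e: "0 < e"
  obtain n where n: "(1/2)^n < e/8" using real_arch_pow_inv[of "e/8" "1/2::real"] e by auto
  define d where "d = e / (2 * (3/2)^n)"
  have d: "d > 0" using e by (simp add: d_def)
  have "dist (cantor_fun y) (cantor_fun x) < e" if y: "y \<in> {0..1}" and dy: "dist y x < d" for y
  proof -
    have k: "(3/2)^n * d = e/2" by (simp add: d_def)
    have p: "(0::real) < (3/2)^n" by simp
    show ?thesis
    proof (cases "x \<le> y")
      case True
      have "(3/2)^n * (y - x) \<le> (3/2)^n * d" using dy True p unfolding dist_real_def by (intro mult_left_mono) auto
      then show ?thesis using F_lip[OF x y True, of n] F_mono[OF True] n k unfolding dist_real_def by auto
    next
      case False
      have "(3/2)^n * (x - y) \<le> (3/2)^n * d" using dy False p unfolding dist_real_def by (intro mult_left_mono) auto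
      then show ?thesis using F_lip[OF y x, of n] F_mono[of y x] False n k unfolding dist_real_def by auto
    qed
  qed
  then show "\<exists>d>0. \<forall>x'\<in>{0..1}. dist x' x < d \<longrightarrow> dist (cantor_fun x') (cantor_fun x) < e"
    using d by blast
qed

lemma F_int: "{a..b} \<subseteq> {0..1} \<Longrightarrow> cantor_fun integrable_on {a..b}"
  by (rule integrable_continuous_interval) (rule continuous_on_subset[OF F_cont])

lemma G_int: "{a..b} \<subseteq> {0..1} \<Longrightarrow> (\<lambda>u. 1 - cantor_fun u) integrable_on {a..b}"
  by (rule integrable_continuous_interval)
     (intro continuous_intros continuous_on_subset[OF F_cont])

lemma Int_refl: assumes "x \<in> {0..1}"
  shows "integral {x..1} (\<lambda>u. 1 - cantor_fun u) = integral {0..1-x} cantor_fun"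
proof -
  have "integral {0..1-x} cantor_fun = integral {x + -1..1 + -1} (\<lambda>u. cantor_fun (-u))"
    using Henstock_Kurzweil_Integration.integral_reflect_real[of "1-x" 0 cantor_fun] by simp
  also have "\<dots> = integral {x..1} ((\<lambda>u. cantor_fun (-u)) \<circ> (+) (-1))"
    by (rule integral_shift_Icc_real[symmetric])
  also have "\<dots> = integral {x..1} (\<lambda>u. 1 - cantor_fun u)"
  proof (rule integral_cong)
    fix u assume "u \<in> {x..1}"
    then have "u \<in> {0..1}" using assms by auto
    then show "((\<lambda>u. cantor_fun (-u)) \<circ> (+) (-1)) u = 1 - cantor_fun u"
      using F_sym[of u] by (simp add: algebra_simps)
  qed
  finally show ?thesis by simp
qed

lemma Int_F01: "integral {0..1} cantor_fun = 1/2"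
proof -
  have "integral {0..1} (\<lambda>u. 1 - cantor_fun u) = integral {0..1} cantor_fun"
    using Int_refl[of 0] by simp
  moreover have "integral {0..1} (\<lambda>u. 1 - cantor_fun u) = 1 - integral {0..1} cantor_fun"
    using integral_diff[OF integrable_const_ivl F_int[of 0 1]] by simp
  ultimately show ?thesis by simp
qed

lemma Int_F_third: "integral {0..1/3} cantor_fun = 1/12"
proof -
  have "integral ((\<lambda>x. x / 3) ` {0..1}) (\<lambda>x. cantor_fun (3 * x)) = (1 / \<bar>3\<bar>) *\<^sub>R integral {0..1} cantor_fun"
    by (rule integral_stretch_real) simp
  then have a: "integral {0..1/3} (\<lambda>x. cantor_fun (3 * x)) = 1/6" using Int_F01 by simp
  have "integral {0..1/3} cantor_fun = integral {0..1/3} (\<lambda>x. cantor_fun (3 * x) / 2)"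
  proof (rule integral_cong)
    fix x :: real assume "x \<in> {0..1/3}"
    then show "cantor_fun x = cantor_fun (3 * x) / 2" using F_third[of "3*x"] by simp
  qed
  also have "\<dots> = 1/12" using a by simp
  finally show ?thesis .
qed

lemma I_twothird: "integral {2/3..1} (\<lambda>u. 1 - cantor_fun u) = 1/12"
  using Int_refl[of "2/3"] Int_F_third by simp

lemma I_mid: assumes "x \<in> {1/3..2/3}"
  shows "integral {x..1} (\<lambda>u. 1 - cantor_fun u) = 5/12 - x/2"
proof -
  have "integral {x..1} (\<lambda>u. 1 - cantor_fun u) = integral {x..2/3} (\<lambda>u. 1 - cantor_fun u) + integral {2/3..1} (\<lambda>u. 1 - cantor_fun u)"
    using assms G_int[of x 1] by (intro Henstock_Kurzweil_Integration.integral_combine[where a=x and c="2/3" and b=1, symmetric]) auto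
  also have "integral {x..2/3} (\<lambda>u. 1 - cantor_fun u) = integral {x..2/3} (\<lambda>u. 1/2)"
    using assms by (intro integral_cong) (auto simp: F_mid)
  also have "\<dots> = (2/3 - x)/2" using assms by simp
  finally show ?thesis using I_twothird by (simp add: field_simps)
qed

lemma F_pow: "cantor_fun ((1/3)^n) = (1/2)^n"
proof (induction n)
  case 0 then show ?case by simp
next
  case (Suc n)
  have "(1/3::real)^Suc n = (1/3)^n / 3" by simp
  moreover have "(1/3::real)^n \<in> {0..1}" by (simp add: power_le_one)
  ultimately show ?case using F_third[of "(1/3)^n"] Suc by simp
qed

lemma F_pos: assumes "z > 0" shows "cantor_fun z > 0"
proof -
  obtain n where "(1/3::real)^n < z" using real_arch_pow_inv[of z "1/3::real"] assms by auto
  then have "cantor_fun ((1/3)^n) \<le> cantor_fun z" by (intro F_mono) simp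
  then show ?thesis using F_pow[of n] by (smt (verit) zero_less_power zero_less_divide_iff)
qed

lemma F_lt1: assumes "x < 1" shows "cantor_fun x < 1"
proof (cases "x < 0")
  case True then show ?thesis by (simp add: cantor_fun_def)
next
  case False
  then have "cantor_fun (1 - x) = 1 - cantor_fun x" using F_sym[of x] assms by auto
  moreover have "cantor_fun (1 - x) > 0" using assms by (intro F_pos) simp
  ultimately show ?thesis by simp
qed

definition Iint :: "real \<Rightarrow> real" where
  "Iint x = integral {x..1} (\<lambda>u. 1 - cantor_fun u)"

lemma mrl_eq: "x < 1 \<Longrightarrow> mrl x = Iint x / (1 - cantor_fun x)"
  by (simp add: mrl_def Iint_def)

lemma G_nonneg: "0 \<le> 1 - cantor_fun u"
  using F_le1[of u] by simp

lemma int_G_nonneg: "{a..b} \<subseteq> {0..1} \<Longrightarrow> 0 \<le> integral {a..b} (\<lambda>u. 1 - cantor_fun u)"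
  by (intro integral_nonneg G_int G_nonneg)

lemma I_split: assumes "0 \<le> a" "a \<le> b" "b \<le> 1"
  shows "Iint a = integral {a..b} (\<lambda>u. 1 - cantor_fun u) + Iint b"
  unfolding Iint_def using assms G_int[of a 1]
  by (intro Henstock_Kurzweil_Integration.integral_combine[where a=a and c=b and b=1, symmetric]) auto

lemma I_nonneg: "x \<in> {0..1} \<Longrightarrow> 0 \<le> Iint x"
  unfolding Iint_def by (intro int_G_nonneg) auto

lemma I_anti: assumes "0 \<le> a" "a \<le> b" "b \<le> 1" shows "Iint b \<le> Iint a"
  using I_split[OF assms] int_G_nonneg[of a b] assms by auto

lemma int_G_upper: assumes "0 \<le> a" "a \<le> b" "b \<le> 1"
  shows "integral {a..b} (\<lambda>u. 1 - cantor_fun u) \<le> (b - a) * (1 - cantor_fun a)"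
proof -
  have "integral {a..b} (\<lambda>u. 1 - cantor_fun u) \<le> integral {a..b} (\<lambda>u. 1 - cantor_fun a)"
    using assms by (intro integral_le G_int) (auto intro: F_mono)
  then show ?thesis using assms by simp
qed

lemma int_G_lower: assumes "0 \<le> a" "a \<le> b" "b \<le> 1"
  shows "(b - a) * (1 - cantor_fun b) \<le> integral {a..b} (\<lambda>u. 1 - cantor_fun u)"
proof -
  have "integral {a..b} (\<lambda>u. 1 - cantor_fun b) \<le> integral {a..b} (\<lambda>u. 1 - cantor_fun u)"
    using assms by (intro integral_le G_int) (auto intro: F_mono)
  then show ?thesis using assms by simp
qed

lemma I_upper: assumes "x \<in> {0..1}" shows "Iint x \<le> (1 - x) * (1 - cantor_fun x)"
  using int_G_upper[of x 1] assms unfolding Iint_def by auto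

lemma mrl_bounds: assumes "0 \<le> x" "x < 1" shows "0 \<le> mrl x" "mrl x \<le> 1 - x"
proof -
  have p: "0 < 1 - cantor_fun x" using F_lt1[OF assms(2)] by simp
  have "0 \<le> Iint x" using I_nonneg assms by auto
  then show "0 \<le> mrl x" using p mrl_eq[OF assms(2)] by simp
  have "Iint x / (1 - cantor_fun x) \<le> 1 - x"
    using I_upper[of x] assms p by (simp add: divide_le_eq)
  then show "mrl x \<le> 1 - x" using mrl_eq[OF assms(2)] by simp
qed

lemma I_cont: "continuous_on {0..1} Iint"
proof -
  have e: "Iint x = integral {0..1} (\<lambda>u. 1 - cantor_fun u) - integral {0..x} (\<lambda>u. 1 - cantor_fun u)"
    if "x \<in> {0..1}" for x
    using I_split[of 0 x] that unfolding Iint_def by auto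
  have "continuous_on {0..1} (\<lambda>x. integral {0..1} (\<lambda>u. 1 - cantor_fun u) - integral {0..x} (\<lambda>u. 1 - cantor_fun u))"
    by (intro continuous_intros indefinite_integral_continuous_1 G_int) auto
  then show ?thesis using continuous_on_eq e by (metis (no_types, lifting))
qed

lemma mrl_cont: "continuous_on {0..1} mrl"
  unfolding continuous_on_iff
proof (intro ballI allI impI)
  fix x e :: real assume x: "x \<in> {0..1}" and e: "0 < e"
  show "\<exists>d>0. \<forall>x'\<in>{0..1}. dist x' x < d \<longrightarrow> dist (mrl x') (mrl x) < e"
  proof (cases "x = 1")
    case True
    have "dist (mrl x') (mrl x) < e" if "x' \<in> {0..1}" "dist x' x < e" for x'
    proof (cases "x' = 1")
      case True then show ?thesis using \<open>x = 1\<close> e by simp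
    next
      case False
      then have "0 \<le> mrl x'" "mrl x' \<le> 1 - x'" using mrl_bounds[of x'] that by auto
      then show ?thesis using that \<open>x = 1\<close> by (simp add: mrl_def dist_real_def)
    qed
    then show ?thesis using e by blast
  next
    case False
    then have x1: "x < 1" using x by auto
    have "continuous_on {0..<1} (\<lambda>y. Iint y / (1 - cantor_fun y))"
      using F_lt1 by (intro continuous_intros continuous_on_subset[OF I_cont] continuous_on_subset[OF F_cont]) force+
    then obtain d where d: "d > 0" "\<forall>y\<in>{0..<1}. dist y x < d \<longrightarrow> dist (Iint y / (1 - cantor_fun y)) (Iint x / (1 - cantor_fun x)) < e"
      using x x1 e unfolding continuous_on_iff by (metis atLeastLessThan_iff atLeastAtMost_iff)
    have "dist (mrl y) (mrl x) < e" if "y \<in> {0..1}" "dist y x < min d (1 - x)" for y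
    proof -
      have "y < 1" using that by (auto simp: dist_real_def)
      then show ?thesis using d that mrl_eq[of y] mrl_eq[OF x1] by auto
    qed
    then show ?thesis using d x1 by (intro exI[of _ "min d (1 - x)"]) auto
  qed
qed

lemma part_i: "x \<in> {0..<1} \<Longrightarrow> mrl x = (1 / cantor_fun (1 - x)) * integral {0..1 - x} cantor_fun"
  using F_sym[of x] Int_refl[of x] by (simp add: mrl_def)

lemma mrl_mid: assumes "x \<in> {1/3..2/3}" shows "mrl x = 5/6 - x"
proof -
  have "x < 1" using assms by auto
  then have "mrl x = (5/12 - x/2) / (1 - 1/2)" using mrl_eq[of x] I_mid[OF assms] F_mid[OF assms]
    by (simp add: Iint_def)
  then show ?thesis by simp
qed

lemma I_third: "Iint (1/3) = 1/4"
  using I_mid[of "1/3"] by (simp add: Iint_def)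

lemma F_29: "cantor_fun (2/9) = 1/4"
  using F_third[of "2/3"] F_mid[of "2/3"] by simp

lemma part_iii: "{x\<in>{0..1}. mrl x = x} = {5/12}"
proof (intro equalityI subsetI)
  fix x assume "x \<in> {5/12::real}"
  then have x: "x = 5/12" by simp
  have "mrl (5/12) = 5/12" using mrl_mid[of "5/12"] by simp
  then show "x \<in> {x\<in>{0..1}. mrl x = x}" unfolding x by simp
next
  fix x assume "x \<in> {x\<in>{0..1}. mrl x = x}"
  then have x: "0 \<le> x" "x \<le> 1" and m: "mrl x = x" by auto
  consider "x < 1/3" | "x \<in> {1/3..2/3}" | "2/3 < x" "x < 1" | "x = 1" using x by force
  then show "x \<in> {5/12}"
  proof cases
    case 1
    have p: "0 < 1 - cantor_fun x" using F_lt1[of x] 1 by simp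
    have "Iint x = integral {x..1/3} (\<lambda>u. 1 - cantor_fun u) + Iint (1/3)"
      using I_split[of x "1/3"] x 1 by simp
    moreover have "(1/3 - x) * (1 - cantor_fun (1/3)) \<le> integral {x..1/3} (\<lambda>u. 1 - cantor_fun u)"
      using int_G_lower[of x "1/3"] x 1 by simp
    moreover have "cantor_fun (1/3) = 1/2" using F_mid[of "1/3"] by simp
    ultimately have I: "5/12 - x/2 \<le> Iint x" using I_third by (simp add: field_simps)
    have mx: "mrl x = Iint x / (1 - cantor_fun x)" using mrl_eq[of x] 1 by simp
    show ?thesis
    proof (cases "x \<le> 2/9")
      case True
      have "Iint x \<le> Iint x / (1 - cantor_fun x)"
        using p F_ge0[of x] I_nonneg[of x] x by (simp add: le_divide_eq mult_left_le)
      then show ?thesis using I mx m True by linarith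
    next
      case False
      have "cantor_fun (2/9) \<le> cantor_fun x" using False by (intro F_mono) simp
      then have q: "1 - cantor_fun x \<le> 3/4" using F_29 by simp
      have "Iint x * (3/4) \<ge> (5/12 - x/2) * (1 - cantor_fun x)"
        using mult_mono[OF I q] p I_nonneg[of x] x 1 by (simp add: mult.commute)
      then have "Iint x / (1 - cantor_fun x) \<ge> (5/12 - x/2) / (3/4)"
        using p by (simp add: field_simps)
      then show ?thesis using mx m 1 by (simp add: field_simps)
    qed
  next
    case 2
    then show ?thesis using mrl_mid[OF 2] m by simp
  next
    case 3
    then show ?thesis using mrl_bounds[of x] m by simp
  next
    case 4
    then show ?thesis using m by (simp add: mrl_def)
  qed
qed

lemma step01: "0 \<in> cantor_step n \<and> 1 \<in> cantor_step n"
proof (induction n)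
  case 0 then show ?case by simp
next
  case (Suc n)
  then have "(0::real) = 0/3 \<and> 0 \<in> cantor_step n" "(1::real) = 2/3 + 1/3 \<and> 1 \<in> cantor_step n" by auto
  then show ?case by (simp only: cantor_step.simps) (metis UnI1 UnI2 image_eqI)
qed

lemma C_not: "x \<in> {0..1} \<Longrightarrow> x \<notin> cantor_step n \<Longrightarrow> \<exists>r>0. \<forall>y. \<bar>y - x\<bar> < r \<longrightarrow> cantor_fun y = cantor_fun x"
proof (induction n arbitrary: x)
  case 0 then show ?case by simp
next
  case (Suc n)
  let ?S = "cantor_step n"
  have "x \<notin> (\<lambda>x. x / 3) ` ?S \<union> (\<lambda>x. 2/3 + x / 3) ` ?S" using Suc.prems(2) by simp
  then have nS: "x \<notin> (\<lambda>x. x / 3) ` ?S" "x \<notin> (\<lambda>x. 2/3 + x / 3) ` ?S" by blast+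
  consider "x \<le> 1/3" | "1/3 < x" "x < 2/3" | "2/3 \<le> x" by linarith
  then show ?case
  proof cases
    case 1
    have z: "3*x \<in> {0..1}" using 1 Suc.prems by auto
    have zS: "3*x \<notin> ?S"
    proof
      assume "3*x \<in> ?S" then have "x \<in> (\<lambda>x. x / 3) ` ?S" by (intro image_eqI[of _ _ "3*x"]) simp_all
      then show False using nS by blast
    qed
    then have "3*x \<noteq> 0" "3*x \<noteq> 1" using step01[of n] by metis+
    then have xb: "0 < x" "x < 1/3" using 1 Suc.prems by auto
    obtain r' where r': "r' > 0" "\<forall>y. \<bar>y - 3*x\<bar> < r' \<longrightarrow> cantor_fun y = cantor_fun (3*x)"
      using Suc.IH[OF z zS] by blast
    define r where "r = min (r'/3) (min x (1/3 - x))"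
    have "r > 0" using r' xb by (simp add: r_def)
    moreover have "cantor_fun y = cantor_fun x" if "\<bar>y - x\<bar> < r" for y
    proof -
      have h: "\<bar>y - x\<bar> < r'/3" "\<bar>y - x\<bar> < x" "\<bar>y - x\<bar> < 1/3 - x" using that unfolding r_def by auto
      have y: "0 < y" "y < 1/3" "\<bar>3*y - 3*x\<bar> < r'" using h unfolding abs_less_iff by linarith+
      have "cantor_fun y = cantor_fun (3*y) / 2" using F_third[of "3*y"] y by simp
      moreover have "cantor_fun x = cantor_fun (3*x) / 2" using F_third[of "3*x"] xb by simp
      moreover have "cantor_fun (3*y) = cantor_fun (3*x)" using r'(2) y(3) by blast
      ultimately show ?thesis by simp
    qed
    ultimately show ?thesis by blast
  next
    case 2
    define r where "r = min (x - 1/3) (2/3 - x)"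
    have "r > 0" using 2 by (simp add: r_def)
    moreover have "cantor_fun y = cantor_fun x" if "\<bar>y - x\<bar> < r" for y
    proof -
      have "y \<in> {1/3..2/3}" using that 2 unfolding r_def abs_less_iff by auto
      then show ?thesis using F_mid[of y] F_mid[of x] 2 by simp
    qed
    ultimately show ?thesis by blast
  next
    case 3
    have z: "3*x - 2 \<in> {0..1}" using 3 Suc.prems by auto
    have zS: "3*x - 2 \<notin> ?S"
    proof
      assume "3*x - 2 \<in> ?S" then have "x \<in> (\<lambda>x. 2/3 + x / 3) ` ?S" by (intro image_eqI[of _ _ "3*x-2"]) (simp_all add: field_simps)
      then show False using nS by blast
    qed
    then have "3*x - 2 \<noteq> 0" "3*x - 2 \<noteq> 1" using step01[of n] by metis+
    then have xb: "2/3 < x" "x < 1" using 3 Suc.prems by auto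
    obtain r' where r': "r' > 0" "\<forall>y. \<bar>y - (3*x - 2)\<bar> < r' \<longrightarrow> cantor_fun y = cantor_fun (3*x - 2)"
      using Suc.IH[OF z zS] by blast
    define r where "r = min (r'/3) (min (x - 2/3) (1 - x))"
    have "r > 0" using r' xb by (simp add: r_def)
    moreover have "cantor_fun y = cantor_fun x" if "\<bar>y - x\<bar> < r" for y
    proof -
      have h: "\<bar>y - x\<bar> < r'/3" "\<bar>y - x\<bar> < x - 2/3" "\<bar>y - x\<bar> < 1 - x" using that unfolding r_def by auto
      have y: "2/3 < y" "y < 1" "\<bar>(3*y - 2) - (3*x - 2)\<bar> < r'" using h unfolding abs_less_iff by linarith+
      have ey: "2/3 + (3*y-2)/3 = y" by (simp add: field_simps)
      have "cantor_fun (2/3 + (3*y-2)/3) = 1/2 + cantor_fun (3*y - 2) / 2" by (rule F_twothird) (use y in auto)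
      then have fy: "cantor_fun y = 1/2 + cantor_fun (3*y - 2) / 2" unfolding ey .
      have ex: "2/3 + (3*x-2)/3 = x" by (simp add: field_simps)
      have "cantor_fun (2/3 + (3*x-2)/3) = 1/2 + cantor_fun (3*x - 2) / 2" by (rule F_twothird) (use xb in auto)
      then have fx: "cantor_fun x = 1/2 + cantor_fun (3*x - 2) / 2" unfolding ex .
      have "cantor_fun (3*y-2) = cantor_fun (3*x-2)" using r'(2) y(3) by blast
      with fx fy show "cantor_fun y = cantor_fun x" by simp
    qed
    ultimately show ?thesis by blast
  qed
qed

lemma basic_interval: "y \<in> cantor_step n \<Longrightarrow> \<exists>a. 0 \<le> a \<and> a + (1/3)^n \<le> 1 \<and> a \<le> y \<and> y \<le> a + (1/3)^n
   \<and> cantor_fun (a + (1/3)^n) - cantor_fun a = (1/2)^n"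
proof (induction n arbitrary: y)
  case 0 then show ?case by (intro exI[of _ 0]) simp
next
  case (Suc n)
  let ?t = "(1/3::real)^n"
  from Suc.prems consider z where "z \<in> cantor_step n" "y = z/3" | z where "z \<in> cantor_step n" "y = 2/3 + z/3"
    by auto
  then show ?case
  proof cases
    case 1
    obtain a where a: "0 \<le> a" "a + ?t \<le> 1" "a \<le> z" "z \<le> a + ?t" "cantor_fun (a + ?t) - cantor_fun a = (1/2)^n"
      using Suc.IH[OF 1(1)] by blast
    have t0: "0 \<le> ?t" by simp
    have e1: "cantor_fun (a/3) = cantor_fun a / 2" using a t0 by (intro F_third) auto
    have e2: "cantor_fun ((a + ?t)/3) = cantor_fun (a + ?t) / 2" using a t0 by (intro F_third) auto
    have tt: "(1/3::real)^Suc n = ?t/3" by simp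
    show ?thesis
      by (rule exI[of _ "a/3"]) (use a 1 e1 e2 tt in \<open>auto simp: add_divide_distrib diff_divide_distrib\<close>)
  next
    case 2
    obtain a where a: "0 \<le> a" "a + ?t \<le> 1" "a \<le> z" "z \<le> a + ?t" "cantor_fun (a + ?t) - cantor_fun a = (1/2)^n"
      using Suc.IH[OF 2(1)] by blast
    have t0: "0 \<le> ?t" by simp
    have e1: "cantor_fun (2/3 + a/3) = 1/2 + cantor_fun a / 2" using a t0 by (intro F_twothird) auto
    have e2: "cantor_fun (2/3 + (a + ?t)/3) = 1/2 + cantor_fun (a + ?t) / 2" using a t0 by (intro F_twothird) auto
    have tt: "(1/3::real)^Suc n = ?t/3" by simp
    have e3: "2/3 + a/3 + ?t/3 = 2/3 + (a + ?t)/3" by simp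
    have e2': "cantor_fun (2/3 + a/3 + ?t/3) = 1/2 + cantor_fun (a + ?t)/2" unfolding e3 by (rule e2)
    show ?thesis
      by (rule exI[of _ "2/3 + a/3"]) (use a 2 e1 e2' tt in \<open>auto simp: diff_divide_distrib\<close>)
  qed
qed

lemma C_incr: assumes x: "0 < x" "x < 1" and xC: "x \<in> cantor_set" and e: "\<epsilon> > 0"
  shows "\<exists>a b. a \<le> b \<and> \<bar>a - x\<bar> < \<epsilon> \<and> \<bar>b - x\<bar> < \<epsilon> \<and> mrl a < mrl b \<and> gmrl a < gmrl b"
proof -
  define x1 where "x1 = (1 + x)/2"
  define x2 where "x2 = (3 + x)/4"
  define K where "K = Iint x1"
  have x12: "0 \<le> x1" "x1 \<le> x2" "x2 < 1" "x < x1" using x by (auto simp: x1_def x2_def)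
  have "Iint x1 = integral {x1..x2} (\<lambda>u. 1 - cantor_fun u) + Iint x2" using I_split[of x1 x2] x12 by simp
  moreover have "(x2 - x1) * (1 - cantor_fun x2) \<le> integral {x1..x2} (\<lambda>u. 1 - cantor_fun u)"
    using int_G_lower[of x1 x2] x12 by simp
  moreover have "0 < (x2 - x1) * (1 - cantor_fun x2)" using F_lt1[of x2] x12 x by (simp add: x1_def x2_def)
  moreover have "0 \<le> Iint x2" using I_nonneg[of x2] x12 by simp
  ultimately have K: "K > 0" unfolding K_def by linarith
  define \<delta> where "\<delta> = min (K*x/3) (min \<epsilon> (min (x/2) ((1-x)/2)))"
  have d: "\<delta> > 0" using K x e by (simp add: \<delta>_def)
  obtain n where n: "(2/3::real)^n < \<delta>" using real_arch_pow_inv[of \<delta> "2/3::real"] d by auto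
  define t where "t = (1/3::real)^n"
  define s where "s = (1/2::real)^n"
  have ts: "t = (2/3)^n * s" unfolding t_def s_def by (simp add: power_mult_distrib[symmetric])
  have s01: "0 < s" "s \<le> 1" unfolding s_def by (simp_all add: power_le_one)
  have t0: "0 < t" unfolding t_def by simp
  have tle: "t \<le> (2/3)^n" unfolding ts using s01 by (simp add: mult_left_le)
  have tlt: "t < \<epsilon>" "t < x/2" "t < (1-x)/2" using tle n by (auto simp: \<delta>_def)
  have tK: "3 * t < K * x * s"
  proof -
    have "(2/3)^n * s < (K*x/3) * s" using n s01 by (intro mult_strict_right_mono) (auto simp: \<delta>_def)
    then show ?thesis unfolding ts by simp
  qed
  have "x \<in> cantor_step n" using xC by (simp add: cantor_set_def)
  from basic_interval[OF this] obtain a where a: "0 \<le> a" "a + t \<le> 1" "a \<le> x" "x \<le> a + t"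
    "cantor_fun (a + t) - cantor_fun a = s" unfolding t_def s_def by blast
  define b where "b = a + t"
  have ab: "x/2 < a" "a < b" "b < x1" "b - a = t" "\<bar>a - x\<bar> < \<epsilon>" "\<bar>b - x\<bar> < \<epsilon>"
    using a tlt t0 x by (auto simp: b_def x1_def)
  define p where "p = 1 - cantor_fun a"
  define q where "q = 1 - cantor_fun b"
  have q: "0 < q" "q = p - s" "p \<le> 1" using F_lt1[of b] ab x12 a(5) F_ge0[of a] by (auto simp: p_def q_def b_def)
  define A where "A = Iint a"
  define B where "B = Iint b"
  have "A = integral {a..b} (\<lambda>u. 1 - cantor_fun u) + B" using I_split[of a b] ab x12 a unfolding A_def B_def by simp
  moreover have "integral {a..b} (\<lambda>u. 1 - cantor_fun u) \<le> t * p"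
    using int_G_upper[of a b] ab x12 a unfolding p_def by simp
  ultimately have AB: "A \<le> t * p + B" by simp
  have BK: "K \<le> B" using I_anti[of b x1] ab x12 a unfolding K_def B_def by simp
  have ma: "mrl a = A / p" using mrl_eq[of a] ab x12 unfolding A_def p_def by simp
  have mb: "mrl b = B / q" using mrl_eq[of b] ab x12 unfolding B_def q_def by simp
  have p0: "0 < p" using q s01 by simp
  have "A / p \<le> t + B / p" using AB p0 by (simp add: field_simps)
  moreover have "B / q - B / p = B * s / (p * q)" using q p0 by (simp add: field_simps) (simp add: q(2) algebra_simps)
  moreover have "B * s \<le> B * s / (p * q)"
  proof -
    have "p * q \<le> 1" using q p0 s01 by (intro mult_le_one) auto
    moreover have "0 \<le> B * s" using BK K s01 by simp
    ultimately show ?thesis using p0 q by (simp add: le_divide_eq mult_left_le)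
  qed
  moreover have "K * s \<le> B * s" using BK s01 by simp
  ultimately have diff: "mrl b - mrl a \<ge> K * s - t" using ma mb by linarith
  have Ks: "K * x * s < K * s" using K x s01 by simp
  have m1: "mrl a < mrl b" using diff tK Ks t0 by linarith
  have mab: "0 \<le> mrl a" "mrl a \<le> 1" using mrl_bounds[of a] ab x12 a by auto
  have f1: "(K * s - t) * (x/2) \<le> (K * s - t) * a" using ab tK Ks t0 by (intro mult_left_mono) auto
  have f2: "(K * s - t) * a \<le> (mrl b - mrl a) * a" using diff ab x by (intro mult_right_mono) auto
  have f3: "mrl a * t \<le> t" using mab t0 by (simp add: mult_left_le_one_le)
  have f4: "t < (K * s - t) * (x/2)"
  proof -
    have "t * x < t" using t0 x by simp
    then show ?thesis using tK by (simp add: algebra_simps)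
  qed
  have e1: "(mrl b - mrl a) * a = mrl b * a - mrl a * a" by (simp add: algebra_simps)
  have e2: "mrl a * b = mrl a * a + mrl a * t" by (simp add: b_def algebra_simps)
  have "mrl a * b < mrl b * a" using f1 f2 f3 f4 e1 e2 by linarith
  then have m2: "mrl a / a < mrl b / b" using ab x by (simp add: divide_less_eq field_simps)
  show ?thesis
    by (intro exI[of _ a] exI[of _ b]) (use ab m1 m2 in \<open>auto simp: gmrl_def\<close>)
qed

lemma not_ld:
  assumes "\<And>\<epsilon>. \<epsilon> > 0 \<Longrightarrow> \<exists>a b. a \<le> b \<and> \<bar>a - x\<bar> < \<epsilon> \<and> \<bar>b - x\<bar> < \<epsilon> \<and> f a < f b"
  shows "\<not> locally_decreasing_at f x"
proof
  assume "locally_decreasing_at f x"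
  then obtain U where U: "open U" "x \<in> U" "\<forall>a\<in>U. \<forall>b\<in>U. a \<le> b \<longrightarrow> f b \<le> f a"
    unfolding locally_decreasing_at_def by blast
  obtain e where e: "e > 0" "\<forall>y. dist y x < e \<longrightarrow> y \<in> U" using U(1,2) unfolding open_dist by blast
  obtain a b where ab: "a \<le> b" "\<bar>a - x\<bar> < e" "\<bar>b - x\<bar> < e" "f a < f b" using assms[OF e(1)] by blast
  have "a \<in> U" "b \<in> U" using e ab by (auto simp: dist_real_def)
  then show False using U(3) ab by fastforce
qed

lemma ld_notC: assumes x: "x \<in> {0<..<1}" and nC: "x \<notin> cantor_set"
  shows "locally_decreasing_at mrl x \<and> locally_decreasing_at gmrl x"
proof -
  obtain n where "x \<notin> cantor_step n" using nC unfolding cantor_set_def by blast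
  moreover have "x \<in> {0..1}" using x by auto
  ultimately obtain r where r: "r > 0" "\<forall>y. \<bar>y - x\<bar> < r \<longrightarrow> cantor_fun y = cantor_fun x"
    using C_not[of x n] by blast
  define r0 where "r0 = min r (min x (1 - x))"
  define U where "U = ball x r0"
  have r0: "r0 > 0" using r x by (simp add: r0_def)
  have Uprop: "0 < y \<and> y < 1 \<and> cantor_fun y = cantor_fun x" if "y \<in> U" for y
  proof -
    have "\<bar>y - x\<bar> < r0" using that by (simp add: U_def dist_real_def abs_minus_commute)
    then have h: "\<bar>y - x\<bar> < r" "\<bar>y - x\<bar> < x" "\<bar>y - x\<bar> < 1 - x" by (auto simp: r0_def)
    then have "cantor_fun y = cantor_fun x" using r(2) by blast
    moreover have "0 < y" "y < 1" using h(2,3) unfolding abs_less_iff by linarith+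
    ultimately show ?thesis by blast
  qed
  have U: "open U" "x \<in> U" "U \<subseteq> {0<..<1}"
    using r0 Uprop unfolding U_def by (simp, simp, force)
  have p: "0 < 1 - cantor_fun x" using F_lt1[of x] x by simp
  have mono: "mrl b \<le> mrl a \<and> 0 \<le> mrl b" if "a \<in> U" "b \<in> U" "a \<le> b" for a b
  proof -
    have a: "0 < a" "a < 1" "cantor_fun a = cantor_fun x" and b: "0 < b" "b < 1" "cantor_fun b = cantor_fun x"
      using Uprop that by auto
    have "Iint b \<le> Iint a" using I_anti[of a b] a b that by simp
    then have "Iint b / (1 - cantor_fun x) \<le> Iint a / (1 - cantor_fun x)" using p by (intro divide_right_mono) auto
    moreover have "0 \<le> mrl b" using mrl_bounds[of b] b by simp
    ultimately show ?thesis using mrl_eq[of a] mrl_eq[of b] a b by simp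
  qed
  have "locally_decreasing_at mrl x"
    unfolding locally_decreasing_at_def by (intro exI[of _ U]) (use U mono in blast)
  moreover have "locally_decreasing_at gmrl x"
    unfolding locally_decreasing_at_def
  proof (intro exI[of _ U] conjI U ballI impI)
    fix a b assume ab: "a \<in> U" "b \<in> U" "a \<le> b"
    have "0 < a" using Uprop ab by auto
    then show "gmrl b \<le> gmrl a" using mono[OF ab] ab(3) unfolding gmrl_def by (intro frac_le) auto
  qed
  ultimately show ?thesis by blast
qed

lemma part_ii: assumes x: "x \<in> {0<..<1}"
  shows "(locally_decreasing_at mrl x \<longleftrightarrow> x \<in> {0..1} - cantor_set) \<and>
         (locally_decreasing_at gmrl x \<longleftrightarrow> x \<in> {0..1} - cantor_set)"
proof (cases "x \<in> cantor_set")
  case True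
  have ex: "\<exists>a b. a \<le> b \<and> \<bar>a - x\<bar> < \<epsilon> \<and> \<bar>b - x\<bar> < \<epsilon> \<and> mrl a < mrl b \<and> gmrl a < gmrl b"
    if "\<epsilon> > 0" for \<epsilon>
    using C_incr[of x \<epsilon>] x True that by simp
  have "\<not> locally_decreasing_at mrl x"
  proof (rule not_ld)
    fix \<epsilon> :: real assume "\<epsilon> > 0"
    then obtain a b where "a \<le> b \<and> \<bar>a - x\<bar> < \<epsilon> \<and> \<bar>b - x\<bar> < \<epsilon> \<and> mrl a < mrl b \<and> gmrl a < gmrl b"
      using ex by blast
    then show "\<exists>a b. a \<le> b \<and> \<bar>a - x\<bar> < \<epsilon> \<and> \<bar>b - x\<bar> < \<epsilon> \<and> mrl a < mrl b" by blast
  qed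
  moreover have "\<not> locally_decreasing_at gmrl x"
  proof (rule not_ld)
    fix \<epsilon> :: real assume "\<epsilon> > 0"
    then obtain a b where "a \<le> b \<and> \<bar>a - x\<bar> < \<epsilon> \<and> \<bar>b - x\<bar> < \<epsilon> \<and> mrl a < mrl b \<and> gmrl a < gmrl b"
      using ex by blast
    then show "\<exists>a b. a \<le> b \<and> \<bar>a - x\<bar> < \<epsilon> \<and> \<bar>b - x\<bar> < \<epsilon> \<and> gmrl a < gmrl b" by blast
  qed
  ultimately show ?thesis using True by blast
next
  case False
  then show ?thesis using ld_notC[OF x False] x by auto
qed

theorem theorem1:
  shows "(continuous_on {0..1} mrl \<and>
          (\<forall>x\<in>{0..<1}. mrl x = (1 / cantor_fun (1 - x)) * integral {0..1 - x} cantor_fun))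
       \<and> (\<forall>x\<in>{0<..<1}.
            (locally_decreasing_at mrl x \<longleftrightarrow> x \<in> {0..1} - cantor_set) \<and>
            (locally_decreasing_at gmrl x \<longleftrightarrow> x \<in> {0..1} - cantor_set))
       \<and> {x\<in>{0..1}. mrl x = x} = {5/12}"
  using mrl_cont part_i part_ii part_iii by blast

end
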